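(* Let $s\ge 1$, $i$ and $j'$ be integers with $s\le i\le 2s$ and $i-s\le j'\le s$. Then $$\sum_{t=0}^{2s-i}\frac{(-1)^t}{2s-t}\binom{2s-i}{t}\binom{2s-t-1-j'}{s-j'}=\frac{(-1)^{s+i+j'}}{i}\binom{s}{j'}\binom{2s}{i}^{-1}.$$
   Context: For an integer $b\ge 0$ and any integer $a$, $\binom{a}{b}=a(a-1)\cdots(a-b+1)/b!$ (so $\binom{a}{0}=1$). *)

theory Defs
  imports "HOL-Analysis.Analysis"
begin

end

theory Submission
  imports Defs
begin
lemma diffD:
  fixes f :: "nat \<Rightarrow> real"
  shows "(\<Sum>t\<le>Suc n. (-1)^t * real (Suc n choose t) * f t)
       = (\<Sum>t\<le>n. (-1)^t * real (n choose t) * (f t - f (Suc t)))"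
proof -
  have e1: "(\<Sum>t\<le>Suc n. (-1)^t * real (n choose t) * f t) = (\<Sum>t\<le>n. (-1)^t * real (n choose t) * f t)"
    by (simp add: sum.atMost_Suc binomial_eq_0)
  have e2: "(\<Sum>t\<le>Suc n. (-1)^t * real (n choose t) * f t) = f 0 + (\<Sum>t\<le>n. (-1)^Suc t * real (n choose Suc t) * f (Suc t))"
    by (subst sum.atMost_Suc_shift) simp
  have e3: "(\<Sum>t\<le>Suc n. (-1)^t * real (Suc n choose t) * f t)
     = f 0 + (\<Sum>t\<le>n. (-1)^Suc t * real (n choose t) * f (Suc t) + (-1)^Suc t * real (n choose Suc t) * f (Suc t))"
    by (subst sum.atMost_Suc_shift) (simp add: algebra_simps)
  have e4: "(\<Sum>t\<le>n. (-1)^t * real (n choose t) * (f t - f (Suc t))) = (\<Sum>t\<le>n. (-1)^t * real (n choose t) * f t) + (\<Sum>t\<le>n. (-1)^Suc t * real (n choose t) * f (Suc t))"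
    by (simp add: sum.distrib[symmetric] algebra_simps)
  have e5: "(\<Sum>t\<le>n. (-1)^Suc t * real (n choose t) * f (Suc t) + (-1)^Suc t * real (n choose Suc t) * f (Suc t)) = (\<Sum>t\<le>n. (-1)^Suc t * real (n choose t) * f (Suc t)) + (\<Sum>t\<le>n. (-1)^Suc t * real (n choose Suc t) * f (Suc t))"
    by (rule sum.distrib)
  show ?thesis using e1 e2 e3 e4 e5 by linarith
qed

lemma lemA:
  fixes x :: real
  shows "(\<Sum>t\<le>n. (-1)^t * real (n choose t) * ((x - real t) gchoose k)) = (if n \<le> k then (x - real n) gchoose (k - n) else 0)"
proof (induction n arbitrary: x k)
  case 0
  then show ?case by simp
next
  case (Suc n)
  show ?case
  proof (cases k)
    case 0
    then show ?thesis using diffD[where f="\<lambda>_. 1" and n=n] by simp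
  next
    case (Suc k')
    have "\<And>t. ((x - real t) gchoose (Suc k')) - ((x - real (Suc t)) gchoose (Suc k')) = ((x - 1 - real t) gchoose k')"
    proof -
      fix t
      have "((x - 1 - real t + 1) gchoose (Suc k')) = ((x - 1 - real t) gchoose k') + ((x - 1 - real t) gchoose (Suc k'))"
        by (rule gbinomial_Suc_Suc)
      then show "?thesis t" by (simp add: algebra_simps)
    qed
    then have "(\<Sum>t\<le>Suc n. (-1)^t * real (Suc n choose t) * ((x - real t) gchoose k))
        = (\<Sum>t\<le>n. (-1)^t * real (n choose t) * ((x - 1 - real t) gchoose k'))"
      by (simp only: diffD Suc)
    also have "\<dots> = (if n \<le> k' then (x - 1 - real n) gchoose (k' - n) else 0)" by (rule Suc.IH)
    finally show ?thesis using Suc by (simp add: algebra_simps)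
  qed
qed

lemma alg: fixes s G N D m :: real
  assumes "G > 0" "N > 0" "D > 0" "D = N - 1 - m" "m \<ge> 0"
  shows "s / (N * G) - s / (D * G) = - s / (N * (D * G / (m + 1)))"
proof -
  have "s / (N * G) - s / (D * G) = s * (D - N) / (N * D * G)" using assms by (simp add: field_simps)
  also have "\<dots> = - s * (m+1) / (N * D * G)" proof -
    have "s * (D - N) = - s * (m+1)" unfolding assms(4) by (simp add: algebra_simps)
    then show ?thesis by simp
  qed
  also have "\<dots> = - s / (N * (D * G / (m + 1)))" using assms by (simp add: field_simps)
  finally show ?thesis .
qed

lemma alg2: fixes P Y D E m :: real
  assumes "D \<noteq> 0" "m \<ge> 0"
  shows "P * ((D + E) * Y / (m + 1)) / D = (1 / (m + 1)) * (P * Y) + (E / (m + 1)) * (P * Y / D)"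
proof -
  have r: "D * inverse D = 1" using assms(1) by simp
  have "P * ((D + E) * Y / (m + 1)) / D = P * Y * inverse (m+1) * (D * inverse D) + E * inverse (m+1) * (P * Y * inverse D)"
    by (simp add: divide_inverse algebra_simps)
  then show ?thesis using r by (simp add: divide_inverse)
qed

lemma gpos:
  fixes a :: real
  assumes "a > real k - 1"
  shows "(a gchoose k) > 0"
proof -
  have "(\<Prod>i = 0..<k. a - of_nat i) > 0"
    by (rule prod_pos) (use assms in auto)
  then have "fact k * (a gchoose k) > 0" by (simp only: gbinomial_mult_fact)
  then show ?thesis by (simp add: zero_less_mult_iff)
qed

lemma lemB:
  fixes N :: real
  shows "N > real n \<Longrightarrow> (\<Sum>t\<le>n. (-1)^t * real (n choose t) * (1 / (N - real t))) = (-1)^n / (N * ((N - 1) gchoose n))"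
proof (induction n arbitrary: N)
  case 0
  then show ?case by simp
next
  case (Suc n)
  have "(\<Sum>t\<le>Suc n. (-1)^t * real (Suc n choose t) * (1 / (N - real t)))
     = (\<Sum>t\<le>n. (-1)^t * real (n choose t) * (1 / (N - real t) - 1 / (N - real (Suc t))))"
    by (rule diffD)
  also have "\<dots> = (\<Sum>t\<le>n. (-1)^t * real (n choose t) * (1 / (N - real t))) - (\<Sum>t\<le>n. (-1)^t * real (n choose t) * (1 / ((N - 1) - real t)))"
    by (simp add: sum_subtractf[symmetric] algebra_simps)
  also have "\<dots> = (-1)^n / (N * ((N - 1) gchoose n)) - (-1)^n / ((N - 1) * ((N - 1 - 1) gchoose n))"
    using Suc.IH[of N] Suc.IH[of "N - 1"] Suc.prems by simp
  also have "\<dots> = (-1)^Suc n / (N * ((N - 1) gchoose (Suc n)))"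
  proof -
    define G where "G = (N - 1) gchoose n"
    have r1: "(N - 1 - real n) * G = (N - 1) * ((N - 1 - 1) gchoose n)"
      unfolding G_def by (rule gbinomial_absorb_comp)
    have r2: "real (Suc n) * ((N - 1) gchoose Suc n) = (N - 1) * ((N - 1 - 1) gchoose n)"
      by (rule gbinomial_absorption)
    have Gp: "G > 0" unfolding G_def using Suc.prems by (intro gpos) simp
    have N1: "N - 1 - real n > 0" using Suc.prems by simp
    have N0: "N > 0" using Suc.prems by simp
    have e1: "(N - 1) * ((N - 1 - 1) gchoose n) = (N - 1 - real n) * G" using r1 by simp
    have e2: "((N - 1) gchoose Suc n) = (N - 1 - real n) * G / real (Suc n)"
      using r2 r1 by (simp add: field_simps)
    have "(-1)^n / (N * G) - (-1)^n / ((N - 1 - real n) * G) = (- ((-1::real)^n)) / (N * ((N - 1 - real n) * G / (real n + 1)))"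
      by (rule alg) (use Gp N1 N0 in auto)
    then show ?thesis unfolding e1 e2 G_def[symmetric] by simp
  qed
  finally show ?case .
qed

lemma lemM:
  fixes N c :: real
  shows "m \<le> n \<Longrightarrow> N > real n \<Longrightarrow> (\<Sum>t\<le>n. (-1)^t * real (n choose t) * ((c - real t) gchoose m) / (N - real t)) = (-1)^n / (N * ((N - 1) gchoose n)) * ((c - N) gchoose m)"
proof (induction m arbitrary: c)
  case 0
  then show ?case using lemB[of n N] by simp
next
  case (Suc m)
  define K where "K = (-1::real)^n / (N * ((N - 1) gchoose n))"
  have tm: "(-1)^t * real (n choose t) * ((c - real t) gchoose (Suc m)) / (N - real t)
     = (1 / (real m + 1)) * ((-1)^t * real (n choose t) * ((c - 1 - real t) gchoose m))
     + ((c - N) / (real m + 1)) * ((-1)^t * real (n choose t) * ((c - 1 - real t) gchoose m) / (N - real t))"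
    if "t \<in> {..n}" for t
  proof -
    have Nt: "N - real t \<noteq> 0" using that Suc.prems by auto
    have ab: "real (Suc m) * ((c - real t) gchoose (Suc m)) = (c - real t) * ((c - real t - 1) gchoose m)"
      by (rule gbinomial_absorption)
    have X: "((c - real t) gchoose (Suc m)) = ((N - real t) + (c - N)) * ((c - 1 - real t) gchoose m) / (real m + 1)"
      using ab by (simp add: field_simps)
    show ?thesis unfolding X using alg2[OF Nt, of "real m" "(-1)^t * real (n choose t)" "c - N" "(c - 1 - real t) gchoose m"] by simp
  qed
  have "(\<Sum>t\<le>n. (-1)^t * real (n choose t) * ((c - real t) gchoose (Suc m)) / (N - real t))
     = (1 / (real m + 1)) * (\<Sum>t\<le>n. (-1)^t * real (n choose t) * ((c - 1 - real t) gchoose m))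
     + ((c - N) / (real m + 1)) * (\<Sum>t\<le>n. (-1)^t * real (n choose t) * ((c - 1 - real t) gchoose m) / (N - real t))"
    by (simp only: sum.cong[OF refl tm] sum.distrib sum_distrib_left)
  also have "(\<Sum>t\<le>n. (-1)^t * real (n choose t) * ((c - 1 - real t) gchoose m)) = 0"
    using lemA[of n "c - 1" m] Suc.prems by simp
  also have "(\<Sum>t\<le>n. (-1)^t * real (n choose t) * ((c - 1 - real t) gchoose m) / (N - real t)) = K * ((c - 1 - N) gchoose m)"
    using Suc.IH[of "c - 1"] Suc.prems unfolding K_def by simp
  also have "((c - N) gchoose (Suc m)) = (c - N) * ((c - 1 - N) gchoose m) / (real m + 1)"
  proof -
    have "real (Suc m) * ((c - N) gchoose (Suc m)) = (c - N) * ((c - N - 1) gchoose m)"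
      by (rule gbinomial_absorption)
    then show ?thesis by (simp add: field_simps)
  qed
  ultimately show ?case unfolding K_def[symmetric] by simp
qed

lemma natv:
  fixes S I J :: nat
  assumes "S \<ge> 1" "S \<le> I" "I \<le> 2 * S" "I \<le> S + J" "J \<le> S"
  shows "(\<Sum>k\<le>2*S-I. (-1)^k / (real (2*S) - real k) * real ((2*S-I) choose k) * ((real (2*S) - real k - 1 - real J) gchoose (S-J)))
     = (-1)^(S+I+J) / real I * real (S choose J) / real (2*S choose I)"
proof -
  define n where "n = 2*S - I"
  define m where "m = S - J"
  define N where "N = real (2*S)"
  define c where "c = real (2*S) - 1 - real J"
  have mn: "m \<le> n" "n \<le> S" using assms unfolding m_def n_def by auto
  have Nn: "N > real n" using assms unfolding N_def n_def by auto
  have "(\<Sum>k\<le>2*S-I. (-1)^k / (real (2*S) - real k) * real ((2*S-I) choose k) * ((real (2*S) - real k - 1 - real J) gchoose (S-J)))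
     = (\<Sum>t\<le>n. (-1)^t * real (n choose t) * ((c - real t) gchoose m) / (N - real t))"
    unfolding n_def m_def c_def N_def by (intro sum.cong refl) (simp add: algebra_simps)
  also have "\<dots> = (-1)^n / (N * ((N - 1) gchoose n)) * ((c - N) gchoose m)"
    by (rule lemM[OF mn(1) Nn])
  also have "(c - N) gchoose m = (-1)^m * real (S choose J)"
  proof -
    have "c - N = - (real J + 1)" unfolding c_def N_def by simp
    then have "(c - N) gchoose m = (-1)^m * ((real J + 1 + real m - 1) gchoose m)"
      using gbinomial_minus[of "real J + 1" m] by simp
    also have "real J + 1 + real m - 1 = real S" using assms unfolding m_def by simp
    also have "real S gchoose m = real (S choose m)" by (simp add: binomial_gbinomial)
    also have "S choose m = S choose J" unfolding m_def using assms by (simp add: binomial_symmetric[symmetric])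
    finally show ?thesis .
  qed
  also have "(N - 1) gchoose n = real ((2*S - 1) choose n)"
  proof -
    have "N - 1 = real (2*S - 1)" unfolding N_def using assms by (simp add: of_nat_diff)
    then show ?thesis by (simp add: binomial_gbinomial)
  qed
  also have "(-1::real)^n / (N * real ((2*S - 1) choose n)) * ((-1)^m * real (S choose J))
      = (-1)^(S+I+J) / real I * real (S choose J) / real (2*S choose I)"
  proof -
    have key: "(2*S) * ((2*S - 1) choose n) = I * (2*S choose I)"
    proof -
      have "(2*S - n) * (2*S choose n) = 2*S * ((2*S - 1) choose n)" by (rule binomial_absorb_comp)
      moreover have "2*S - n = I" unfolding n_def using assms by simp
      moreover have "2*S choose n = 2*S choose I" unfolding n_def using assms by (simp add: binomial_symmetric[symmetric])
      ultimately show ?thesis by simp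
    qed
    then have keyr: "N * real ((2*S - 1) choose n) = real I * real (2*S choose I)"
      unfolding N_def by (metis of_nat_mult)
    have sg: "(-1::real)^n * (-1)^m = (-1)^(S+I+J)"
    proof -
      have "S + I + J = n + m + 2 * (2*S - n - m)" using assms mn unfolding n_def m_def by simp
      then show ?thesis by (simp add: power_add power_mult)
    qed
    show ?thesis unfolding keyr sg[symmetric] by simp
  qed
  finally show ?thesis .
qed

theorem lemma7:
  fixes s i j' :: int
  assumes "s \<ge> 1" and "s \<le> i" and "i \<le> 2 * s" and "i - s \<le> j'" and "j' \<le> s"
  shows "(\<Sum>t = 0..2 * s - i.
            (-1) ^ nat t / real_of_int (2 * s - t)
            * (real_of_int (2 * s - i) gchoose nat t)
            * (real_of_int (2 * s - t - 1 - j') gchoose nat (s - j')))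
         = (-1) ^ nat (s + i + j') / real_of_int i
            * (real_of_int s gchoose nat j')
            / (real_of_int (2 * s) gchoose nat i)"
proof -
  obtain S where S: "s = int S" using assms(1) by (metis int_nat_eq zero_le_one order_trans nat_0_le)
  obtain I where I: "i = int I" using assms(1,2) by (metis int_nat_eq zero_le_one order_trans nat_0_le)
  obtain J where J: "j' = int J" using assms(2,4) by (metis int_nat_eq diff_ge_0_iff_ge order_trans nat_0_le)
  have a: "S \<ge> 1" "S \<le> I" "I \<le> 2 * S" "I \<le> S + J" "J \<le> S" using assms unfolding S I J by auto
  have dom: "{0..2 * s - i} = int ` {..2*S-I}"
  proof
    show "{0..2 * s - i} \<subseteq> int ` {..2*S-I}"
    proof
      fix x assume "x \<in> {0..2 * s - i}"
      then have "x = int (nat x)" "nat x \<in> {..2*S-I}" using a unfolding S I by auto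
      then show "x \<in> int ` {..2*S-I}" by blast
    qed
    show "int ` {..2*S-I} \<subseteq> {0..2 * s - i}" using a unfolding S I by auto
  qed
  have "(\<Sum>t = 0..2 * s - i.
            (-1) ^ nat t / real_of_int (2 * s - t)
            * (real_of_int (2 * s - i) gchoose nat t)
            * (real_of_int (2 * s - t - 1 - j') gchoose nat (s - j')))
      = (\<Sum>k\<le>2*S-I. (-1)^k / (real (2*S) - real k) * real ((2*S-I) choose k) * ((real (2*S) - real k - 1 - real J) gchoose (S-J)))"
    unfolding dom
  proof (subst sum.reindex, simp, intro sum.cong refl)
    fix k assume "k \<in> {..2*S-I}"
    have e1: "real_of_int (2 * s - i) = real (2*S-I)" using a unfolding S I by (simp add: of_nat_diff)
    have e2: "nat (s - j') = S - J" unfolding S J using a by simp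
    show "((\<lambda>t. (-1) ^ nat t / real_of_int (2 * s - t)
            * (real_of_int (2 * s - i) gchoose nat t)
            * (real_of_int (2 * s - t - 1 - j') gchoose nat (s - j'))) \<circ> int) k
       = (-1)^k / (real (2*S) - real k) * real ((2*S-I) choose k) * ((real (2*S) - real k - 1 - real J) gchoose (S-J))"
      unfolding e1 e2 by (simp add: binomial_gbinomial S J)
  qed
  also have "\<dots> = (-1)^(S+I+J) / real I * real (S choose J) / real (2*S choose I)"
    by (rule natv[OF a])
  also have "\<dots> = (-1) ^ nat (s + i + j') / real_of_int i
            * (real_of_int s gchoose nat j')
            / (real_of_int (2 * s) gchoose nat i)"
    unfolding S I J by (simp add: binomial_gbinomial nat_add_distrib)
  finally show ?thesis .
qed

end
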